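(* Let $\nabla$ be a Type $\mathcal A$ connection on $\mathbb R^2$ whose Ricci tensor is non-degenerate, and let $U\subset\mathbb R^2$ be a connected open set. Then the affine Killing vector fields of $\nabla$ on $U$ are exactly the vector fields $b^1\partial_{x^1}+b^2\partial_{x^2}$ with $b^1,b^2\in\mathbb R$ constant.
   Context: A torsion-free connection has Christoffel symbols $\nabla_{\partial_{x^i}}\partial_{x^j}=\Gamma_{ij}^k\partial_{x^k}$; curvature $R(X,Y)Z=\nabla_X\nabla_YZ-\nabla_Y\nabla_XZ-\nabla_{[X,Y]}Z$, Ricci tensor $\rho(Y,Z)=\mathrm{Tr}(X\mapsto R(X,Y)Z)$. For real constants, $\Gamma(a,b,c,d,e,f)$ denotes the connection on $\mathbb R^2$ with constant Christoffel symbols $\Gamma_{11}^1=a$, $\Gamma_{11}^2=b$, $\Gamma_{12}^1=\Gamma_{21}^1=c$, $\Gamma_{12}^2=\Gamma_{21}^2=d$, $\Gamma_{22}^1=e$, $\Gamma_{22}^2=f$; these are the Type $\mathcal A$ connections. A vector field $X$ on $U$ is an affine Killing vector field if $\mathcal L_X\nabla=0$, i.e. $[X,\nabla_YZ]-\nabla_Y[X,Z]-\nabla_{[X,Y]}Z=0$ for all vector fields $Y,Z$ on $U$. *)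

theory Defs
  imports "HOL-Analysis.Analysis"
begin

text \<open>Points of the plane and tangent vectors are elements of real^2; the coordinates
  x^1, x^2 are the components indexed by 1, 2 :: 2.  A vector field is a function
  real^2 => real^2 (only its values on the relevant open set matter).\<close>

type_synonym vf = "real^2 \<Rightarrow> real^2"

fun Ck_on :: "nat \<Rightarrow> (real^2) set \<Rightarrow> (real^2 \<Rightarrow> 'b::real_normed_vector) \<Rightarrow> bool" where
  "Ck_on 0 U F = continuous_on U F"
| "Ck_on (Suc k) U F =
     (F differentiable_on U \<and> (\<forall>v. Ck_on k U (\<lambda>p. frechet_derivative F (at p) v)))"

definition smooth_on :: "(real^2) set \<Rightarrow> (real^2 \<Rightarrow> 'b::real_normed_vector) \<Rightarrow> bool" where
  "smooth_on U F \<longleftrightarrow> (\<forall>k. Ck_on k U F)"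

text \<open>Type A connection Gamma(a,b,c,d,e,f): Christoffel symbols Gam i j k = Gamma_ij^k.\<close>
definition typeA :: "real \<Rightarrow> real \<Rightarrow> real \<Rightarrow> real \<Rightarrow> real \<Rightarrow> real \<Rightarrow> 2 \<Rightarrow> 2 \<Rightarrow> 2 \<Rightarrow> real" where
  "typeA a b c d e f i j k =
     (if i = 1 \<and> j = 1 then (if k = 1 then a else b)
      else if i = 2 \<and> j = 2 then (if k = 1 then e else f)
      else (if k = 1 then c else d))"

definition dirderiv :: "vf \<Rightarrow> vf \<Rightarrow> vf" where
  "dirderiv Y Z = (\<lambda>p. frechet_derivative Z (at p) (Y p))"

definition nabla :: "(2 \<Rightarrow> 2 \<Rightarrow> 2 \<Rightarrow> real) \<Rightarrow> vf \<Rightarrow> vf \<Rightarrow> vf" where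
  "nabla Gam Y Z = (\<lambda>p. dirderiv Y Z p +
      (\<chi> k. \<Sum>i\<in>UNIV. \<Sum>j\<in>UNIV. Y p $ i * Z p $ j * Gam i j k))"

definition lie :: "vf \<Rightarrow> vf \<Rightarrow> vf" where
  "lie X Y = (\<lambda>p. dirderiv X Y p - dirderiv Y X p)"

definition coord :: "2 \<Rightarrow> vf" where
  "coord i = (\<lambda>p. axis i 1)"

definition curv :: "(2 \<Rightarrow> 2 \<Rightarrow> 2 \<Rightarrow> real) \<Rightarrow> vf \<Rightarrow> vf \<Rightarrow> vf \<Rightarrow> vf" where
  "curv Gam X Y Z = (\<lambda>p. nabla Gam X (nabla Gam Y Z) p - nabla Gam Y (nabla Gam X Z) p
                          - nabla Gam (lie X Y) Z p)"

definition ricci :: "(2 \<Rightarrow> 2 \<Rightarrow> 2 \<Rightarrow> real) \<Rightarrow> real^2 \<Rightarrow> 2 \<Rightarrow> 2 \<Rightarrow> real" where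
  "ricci Gam p j k = (\<Sum>i\<in>UNIV. curv Gam (coord i) (coord j) (coord k) p $ i)"

definition ricci_nondegenerate :: "(2 \<Rightarrow> 2 \<Rightarrow> 2 \<Rightarrow> real) \<Rightarrow> bool" where
  "ricci_nondegenerate Gam \<longleftrightarrow> (\<forall>p. det (\<chi> j k. ricci Gam p j k) \<noteq> 0)"

text \<open>Affine Killing vector field on U: smooth X with L_X nabla = 0, i.e.
  [X, nabla_Y Z] - nabla_Y [X,Z] - nabla_[X,Y] Z = 0 on U for all smooth Y, Z on U.\<close>
definition affine_killing :: "(2 \<Rightarrow> 2 \<Rightarrow> 2 \<Rightarrow> real) \<Rightarrow> (real^2) set \<Rightarrow> vf \<Rightarrow> bool" where
  "affine_killing Gam U X \<longleftrightarrow> smooth_on U X \<and>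
     (\<forall>Y Z. smooth_on U Y \<longrightarrow> smooth_on U Z \<longrightarrow>
        (\<forall>p\<in>U. lie X (nabla Gam Y Z) p - nabla Gam Y (lie X Z) p
                 - nabla Gam (lie X Y) Z p = 0))"

end

theory Submission
  imports Defs
begin

lemma transf:
  assumes "(f has_derivative f') (at x)" "open U" "x \<in> U" "\<And>q. q \<in> U \<Longrightarrow> f q = g q"
  shows "(g has_derivative f') (at x)"
  by (rule has_derivative_transform_within_open[OF assms(1) assms(2) assms(3)]) (rule assms(4))

lemma fd_cong:
  assumes "open U" "p \<in> U" "\<And>q. q \<in> U \<Longrightarrow> f q = g q"
  shows "frechet_derivative f (at p) = frechet_derivative g (at p)"
proof -
  have "(f has_derivative f') (at p) \<longleftrightarrow> (g has_derivative f') (at p)" for f'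
  proof
    assume "(f has_derivative f') (at p)"
    then show "(g has_derivative f') (at p)" by (rule transf) (use assms in auto)
  next
    assume "(g has_derivative f') (at p)"
    then show "(f has_derivative f') (at p)" by (rule transf) (use assms in auto)
  qed
  then show ?thesis unfolding frechet_derivative_def by simp
qed

lemma Ck_const:
  assumes "open U" "\<And>q. q \<in> U \<Longrightarrow> F q = c"
  shows "Ck_on k U F"
  using assms(2)
proof (induction k arbitrary: F c)
  case 0
  have "continuous_on U F"
    by (rule continuous_on_eq[OF continuous_on_const[of U c]]) (use 0 in auto)
  then show ?case by simp
next
  case (Suc k)
  have hd: "(F has_derivative (\<lambda>x. 0)) (at q)" if "q \<in> U" for q
    by (rule transf[OF has_derivative_const assms(1) that]) (simp add: Suc.prems)
  have "F differentiable_on U"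
    using hd assms(1) differentiable_on_eq_differentiable_at differentiable_def by blast
  moreover have "Ck_on k U (\<lambda>p. frechet_derivative F (at p) v)" for v
  proof (rule Suc.IH[where c=0])
    fix q assume "q \<in> U"
    then show "frechet_derivative F (at q) v = 0"
      using frechet_derivative_at[OF hd[OF \<open>q \<in> U\<close>], symmetric] by simp
  qed
  ultimately show ?case by simp
qed

lemma smooth_const:
  assumes "open U" "\<And>q. q \<in> U \<Longrightarrow> F q = c"
  shows "smooth_on U F"
  unfolding smooth_on_def by (intro allI Ck_const[OF assms])

lemma double_mvt:
  fixes g :: "real^2 \<Rightarrow> real"
  assumes h: "0 < h"
    and box: "\<And>s t. 0 \<le> s \<Longrightarrow> s \<le> h \<Longrightarrow> 0 \<le> t \<Longrightarrow> t \<le> h \<Longrightarrow> p + s *\<^sub>R u + t *\<^sub>R w \<in> U"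
    and dg: "\<And>q. q \<in> U \<Longrightarrow> (g has_derivative g' q) (at q)"
    and du: "\<And>q. q \<in> U \<Longrightarrow> ((\<lambda>q. g' q u) has_derivative hu q) (at q)"
  shows "\<exists>s t. 0 < s \<and> s < h \<and> 0 < t \<and> t < h \<and>
     g (p + h *\<^sub>R u + h *\<^sub>R w) - g (p + h *\<^sub>R u) - g (p + h *\<^sub>R w) + g p
       = h * h * hu (p + s *\<^sub>R u + t *\<^sub>R w) w"
proof -
  define \<phi> where "\<phi> t = g (p + t *\<^sub>R u + h *\<^sub>R w) - g (p + t *\<^sub>R u + 0 *\<^sub>R w)" for t
  have lin: "linear (g' q)" if "q \<in> U" for q
    using dg[OF that] has_derivative_linear by blast
  have linh: "linear (hu q)" if "q \<in> U" for q
    using du[OF that] has_derivative_linear by blast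
  have dphi: "(\<phi> has_derivative (\<lambda>x. x * (g' (p + t *\<^sub>R u + h *\<^sub>R w) u - g' (p + t *\<^sub>R u + 0 *\<^sub>R w) u)))
     (at t within {0..h})" if "0 \<le> t" "t \<le> h" for t
  proof -
    have l1: "((\<lambda>t. p + t *\<^sub>R u + c *\<^sub>R w) has_derivative (\<lambda>x. x *\<^sub>R u)) (at t within {0..h})" for c
      by (auto intro!: derivative_eq_intros)
    have "((\<lambda>t. g (p + t *\<^sub>R u + c *\<^sub>R w)) has_derivative (\<lambda>x. g' (p + t *\<^sub>R u + c *\<^sub>R w) (x *\<^sub>R u))) (at t within {0..h})"
      if "0 \<le> c" "c \<le> h" for c
      by (rule has_derivative_compose[OF l1 dg]) (use box that \<open>0 \<le> t\<close> \<open>t \<le> h\<close> in auto)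
    from this[of h] this[of 0] have "(\<phi> has_derivative (\<lambda>x. g' (p + t *\<^sub>R u + h *\<^sub>R w) (x *\<^sub>R u) - g' (p + t *\<^sub>R u + 0 *\<^sub>R w) (x *\<^sub>R u))) (at t within {0..h})"
      unfolding \<phi>_def using h by (intro has_derivative_diff) auto
    moreover have "g' (p + t *\<^sub>R u + c *\<^sub>R w) (x *\<^sub>R u) = x * g' (p + t *\<^sub>R u + c *\<^sub>R w) u" if "0 \<le> c" "c \<le> h" for x c
      using lin[OF box[OF \<open>0 \<le> t\<close> \<open>t \<le> h\<close> that]] by (simp add: linear_scale)
    ultimately show ?thesis using h by (simp only: right_diff_distrib)
  qed
  obtain s where s: "s \<in> {0<..<h}" and seq: "\<phi> h - \<phi> 0 = h * (g' (p + s *\<^sub>R u + h *\<^sub>R w) u - g' (p + s *\<^sub>R u + 0 *\<^sub>R w) u)"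
    using mvt_simple[OF h, of \<phi>, OF dphi] by auto
  define \<psi> where "\<psi> t = g' (p + s *\<^sub>R u + t *\<^sub>R w) u" for t
  have dpsi: "(\<psi> has_derivative (\<lambda>x. x * hu (p + s *\<^sub>R u + t *\<^sub>R w) w)) (at t within {0..h})" if "0 \<le> t" "t \<le> h" for t
  proof -
    have l1: "((\<lambda>t. p + s *\<^sub>R u + t *\<^sub>R w) has_derivative (\<lambda>x. x *\<^sub>R w)) (at t within {0..h})"
      by (auto intro!: derivative_eq_intros)
    have q: "p + s *\<^sub>R u + t *\<^sub>R w \<in> U" using box s that by auto
    have "(\<psi> has_derivative (\<lambda>x. hu (p + s *\<^sub>R u + t *\<^sub>R w) (x *\<^sub>R w))) (at t within {0..h})"
      unfolding \<psi>_def by (rule has_derivative_compose[OF l1 du[OF q]])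
    then show ?thesis using linh[OF q] by (simp add: linear_scale)
  qed
  obtain t where t: "t \<in> {0<..<h}" and teq: "\<psi> h - \<psi> 0 = hu (p + s *\<^sub>R u + t *\<^sub>R w) w * h"
    using mvt_simple[OF h, of \<psi>, OF dpsi] by auto
  have "g (p + h *\<^sub>R u + h *\<^sub>R w) - g (p + h *\<^sub>R u) - g (p + h *\<^sub>R w) + g p = \<phi> h - \<phi> 0"
    unfolding \<phi>_def by simp
  also have "\<dots> = h * (\<psi> h - \<psi> 0)" using seq unfolding \<psi>_def by simp
  also have "\<dots> = h * h * hu (p + s *\<^sub>R u + t *\<^sub>R w) w" using teq by simp
  finally show ?thesis using s t by auto
qed

lemma clairaut:
  fixes g :: "real^2 \<Rightarrow> real"
  assumes U: "open U" and p: "p \<in> U"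
    and dg: "\<And>q. q \<in> U \<Longrightarrow> (g has_derivative g' q) (at q)"
    and du: "\<And>q. q \<in> U \<Longrightarrow> ((\<lambda>q. g' q u) has_derivative hu q) (at q)"
    and dw: "\<And>q. q \<in> U \<Longrightarrow> ((\<lambda>q. g' q w) has_derivative hw q) (at q)"
    and cu: "continuous_on U (\<lambda>q. hu q w)" and cw: "continuous_on U (\<lambda>q. hw q u)"
  shows "hu p w = hw p u"
proof (rule ccontr)
  assume ne: "hu p w \<noteq> hw p u"
  define \<delta> where "\<delta> = \<bar>hu p w - hw p u\<bar>"
  have dpos: "\<delta> > 0" using ne unfolding \<delta>_def by auto
  have ca: "continuous (at p) (\<lambda>q. hu q w)" "continuous (at p) (\<lambda>q. hw q u)"
    using cu cw U p continuous_on_eq_continuous_at by blast+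
  obtain r1 where r1: "r1 > 0" "\<And>q. dist q p < r1 \<Longrightarrow> dist (hu q w) (hu p w) < \<delta>/2"
    using ca(1) dpos unfolding continuous_at_eps_delta by (metis half_gt_zero)
  obtain r2 where r2: "r2 > 0" "\<And>q. dist q p < r2 \<Longrightarrow> dist (hw q u) (hw p u) < \<delta>/2"
    using ca(2) dpos unfolding continuous_at_eps_delta by (metis half_gt_zero)
  obtain r3 where r3: "r3 > 0" "ball p r3 \<subseteq> U"
    using U p open_contains_ball by blast
  define r where "r = min r1 (min r2 r3)"
  have rpos: "r > 0" using r1 r2 r3 unfolding r_def by auto
  define h where "h = r / (2 * (norm u + norm w + 1))"
  have nn: "0 \<le> norm u" "0 \<le> norm w" by simp_all
  have den: "2 * (norm u + norm w + 1) > 0" using nn by smt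
  have hpos: "h > 0" unfolding h_def using rpos den by (rule divide_pos_pos)
  have close: "dist (p + s *\<^sub>R u + t *\<^sub>R w) p < r" if "0 \<le> s" "s \<le> h" "0 \<le> t" "t \<le> h" for s t
  proof -
    have "dist (p + s *\<^sub>R u + t *\<^sub>R w) p = norm (s *\<^sub>R u + t *\<^sub>R w)"
      by (simp add: dist_norm)
    also have "\<dots> \<le> s * norm u + t * norm w"
      using norm_triangle_ineq[of "s *\<^sub>R u" "t *\<^sub>R w"] that by simp
    also have "\<dots> \<le> h * norm u + h * norm w"
      using that by (intro add_mono mult_right_mono) auto
    also have "\<dots> = h * (norm u + norm w)" by (simp add: distrib_left)
    also have "\<dots> < h * (2 * (norm u + norm w + 1))"
      using hpos nn by (intro mult_strict_left_mono) (smt, simp)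
    also have "\<dots> = r" unfolding h_def using den by simp
    finally show ?thesis .
  qed
  have boxU: "p + s *\<^sub>R u + t *\<^sub>R w \<in> U" if "0 \<le> s" "s \<le> h" "0 \<le> t" "t \<le> h" for s t
  proof -
    have "dist p (p + s *\<^sub>R u + t *\<^sub>R w) < r3" using close[OF that] unfolding r_def by (simp add: dist_commute)
    then show ?thesis using r3(2) by (meson mem_ball subsetD)
  qed
  have swap: "p + s *\<^sub>R w + t *\<^sub>R u = p + t *\<^sub>R u + s *\<^sub>R w" for s t
    by (simp add: algebra_simps)
  have boxU': "p + s *\<^sub>R w + t *\<^sub>R u \<in> U" if "0 \<le> s" "s \<le> h" "0 \<le> t" "t \<le> h" for s t
    using boxU[of t s] that unfolding swap by blast
  obtain s1 t1 where st1: "0 < s1" "s1 < h" "0 < t1" "t1 < h"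
    and e1: "g (p + h *\<^sub>R u + h *\<^sub>R w) - g (p + h *\<^sub>R u) - g (p + h *\<^sub>R w) + g p
       = h * h * hu (p + s1 *\<^sub>R u + t1 *\<^sub>R w) w"
    using double_mvt[OF hpos boxU dg du] by blast
  obtain s2 t2 where st2: "0 < s2" "s2 < h" "0 < t2" "t2 < h"
    and e2: "g (p + h *\<^sub>R w + h *\<^sub>R u) - g (p + h *\<^sub>R w) - g (p + h *\<^sub>R u) + g p
       = h * h * hw (p + s2 *\<^sub>R w + t2 *\<^sub>R u) u"
    using double_mvt[OF hpos boxU' dg dw] by blast
  have "h * h * hu (p + s1 *\<^sub>R u + t1 *\<^sub>R w) w = h * h * hw (p + s2 *\<^sub>R w + t2 *\<^sub>R u) u"
    using e1 e2 unfolding swap[of h h] by linarith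
  then have eq: "hu (p + s1 *\<^sub>R u + t1 *\<^sub>R w) w = hw (p + s2 *\<^sub>R w + t2 *\<^sub>R u) u"
    using hpos by simp
  have "dist (p + s1 *\<^sub>R u + t1 *\<^sub>R w) p < r" using close[of s1 t1] st1 by simp
  then have "dist (p + s1 *\<^sub>R u + t1 *\<^sub>R w) p < r1" unfolding r_def by simp
  then have d1: "dist (hu (p + s1 *\<^sub>R u + t1 *\<^sub>R w) w) (hu p w) < \<delta>/2"
    by (rule r1(2))
  have "dist (p + s2 *\<^sub>R w + t2 *\<^sub>R u) p < r"
    using close[of t2 s2] st2 unfolding swap by simp
  then have "dist (p + s2 *\<^sub>R w + t2 *\<^sub>R u) p < r2" unfolding r_def by simp
  then have d2: "dist (hw (p + s2 *\<^sub>R w + t2 *\<^sub>R u) u) (hw p u) < \<delta>/2"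
    by (rule r2(2))
  have key: "\<And>A P Q :: real. \<bar>A - P\<bar> < \<bar>P - Q\<bar>/2 \<Longrightarrow> \<bar>A - Q\<bar> < \<bar>P - Q\<bar>/2 \<Longrightarrow> False"
    by (auto simp: abs_if split: if_split_asm)
  have d2': "\<bar>hu (p + s1 *\<^sub>R u + t1 *\<^sub>R w) w - hw p u\<bar> < \<bar>hu p w - hw p u\<bar> / 2"
    using d2 eq unfolding \<delta>_def dist_real_def by simp
  show False using key[OF _ d2'] d1 unfolding \<delta>_def dist_real_def by blast
qed

definition Lf :: "(2 \<Rightarrow> 2 \<Rightarrow> 2 \<Rightarrow> real) \<Rightarrow> 2 \<Rightarrow> 2 \<Rightarrow> 2 \<Rightarrow> real^2^2 \<Rightarrow> real" where
  "Lf G i j k \<mu> = (\<Sum>l\<in>UNIV. G i j l * \<mu>$l$k) - (\<Sum>l\<in>UNIV. G i l k * \<mu>$j$l) - (\<Sum>l\<in>UNIV. G l j k * \<mu>$i$l)"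

definition Nm :: "(2 \<Rightarrow> 2 \<Rightarrow> 2 \<Rightarrow> real) \<Rightarrow> 2 \<Rightarrow> real^2^2 \<Rightarrow> real^2^2" where
  "Nm G l \<mu> = (\<chi> j k. Lf G l j k \<mu>)"

definition rc :: "(2 \<Rightarrow> 2 \<Rightarrow> 2 \<Rightarrow> real) \<Rightarrow> 2 \<Rightarrow> 2 \<Rightarrow> real" where
  "rc G j k = (\<Sum>i\<in>UNIV. \<Sum>l\<in>UNIV. G j k l * G i l i - G i k l * G j l i)"

definition RM :: "(2 \<Rightarrow> 2 \<Rightarrow> 2 \<Rightarrow> real) \<Rightarrow> real^2^2 \<Rightarrow> 2 \<Rightarrow> 2 \<Rightarrow> real" where
  "RM G \<nu> i j = (\<Sum>l\<in>UNIV. rc G i l * \<nu>$j$l)"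

definition Dt :: "(2 \<Rightarrow> 2 \<Rightarrow> 2 \<Rightarrow> real) \<Rightarrow> real" where
  "Dt G = rc G 1 1 * rc G 2 2 - rc G 1 2 * rc G 2 1"

definition E1 :: "(2 \<Rightarrow> 2 \<Rightarrow> 2 \<Rightarrow> real) \<Rightarrow> real^2^2 \<Rightarrow> bool" where
  "E1 G \<nu> \<longleftrightarrow> (\<forall>i j k l. Lf G i j k (Nm G l \<nu>) = Lf G l j k (Nm G i \<nu>))"

lemmas exp_simps = E1_def Lf_def Nm_def rc_def RM_def Dt_def typeA_def sum_2 forall_2

lemma alg_skew:
  assumes "E1 (typeA a b c d e f) \<nu>"
  shows "RM (typeA a b c d e f) \<nu> 1 1 = 0" "RM (typeA a b c d e f) \<nu> 2 2 = 0"
    "RM (typeA a b c d e f) \<nu> 1 2 + RM (typeA a b c d e f) \<nu> 2 1 = 0"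
  using assms by (simp_all add: exp_simps) algebra+

definition Am :: "(2 \<Rightarrow> 2 \<Rightarrow> 2 \<Rightarrow> real) \<Rightarrow> real^2^2" where
  "Am G = (\<chi> j k. if j = 1 then (if k = 1 then rc G 1 2 else - rc G 1 1)
                    else (if k = 1 then rc G 2 2 else - rc G 1 2))"

lemma alg_scale4:
  assumes "RM (typeA a b c d e f) \<nu> 1 1 = 0" "RM (typeA a b c d e f) \<nu> 2 2 = 0"
    "RM (typeA a b c d e f) \<nu> 1 2 + RM (typeA a b c d e f) \<nu> 2 1 = 0"
  shows "Dt (typeA a b c d e f) * \<nu>$1$1 = RM (typeA a b c d e f) \<nu> 1 2 * Am (typeA a b c d e f) $1$1"
    "Dt (typeA a b c d e f) * \<nu>$1$2 = RM (typeA a b c d e f) \<nu> 1 2 * Am (typeA a b c d e f) $1$2"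
    "Dt (typeA a b c d e f) * \<nu>$2$1 = RM (typeA a b c d e f) \<nu> 1 2 * Am (typeA a b c d e f) $2$1"
    "Dt (typeA a b c d e f) * \<nu>$2$2 = RM (typeA a b c d e f) \<nu> 1 2 * Am (typeA a b c d e f) $2$2"
  using assms by (simp_all add: exp_simps Am_def) algebra+

lemma alg_scale:
  assumes "RM (typeA a b c d e f) \<nu> 1 1 = 0" "RM (typeA a b c d e f) \<nu> 2 2 = 0"
    "RM (typeA a b c d e f) \<nu> 1 2 + RM (typeA a b c d e f) \<nu> 2 1 = 0"
  shows "Dt (typeA a b c d e f) * \<nu>$j$k = RM (typeA a b c d e f) \<nu> 1 2 * Am (typeA a b c d e f) $j$k"
  using alg_scale4[OF assms] exhaust_2[of j] exhaust_2[of k] by auto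

lemma alg_noderiv:
  assumes "RM (typeA a b c d e f) (Nm (typeA a b c d e f) 1 (Am (typeA a b c d e f))) 1 1 = 0"
    "RM (typeA a b c d e f) (Nm (typeA a b c d e f) 1 (Am (typeA a b c d e f))) 2 2 = 0"
    "RM (typeA a b c d e f) (Nm (typeA a b c d e f) 1 (Am (typeA a b c d e f))) 1 2
     + RM (typeA a b c d e f) (Nm (typeA a b c d e f) 1 (Am (typeA a b c d e f))) 2 1 = 0"
    "RM (typeA a b c d e f) (Nm (typeA a b c d e f) 2 (Am (typeA a b c d e f))) 1 1 = 0"
    "RM (typeA a b c d e f) (Nm (typeA a b c d e f) 2 (Am (typeA a b c d e f))) 2 2 = 0"
    "RM (typeA a b c d e f) (Nm (typeA a b c d e f) 2 (Am (typeA a b c d e f))) 1 2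
     + RM (typeA a b c d e f) (Nm (typeA a b c d e f) 2 (Am (typeA a b c d e f))) 2 1 = 0"
  shows "Dt (typeA a b c d e f) = 0"
  using assms by (simp add: exp_simps Am_def) algebra

lemma RMN_lin:
  "RM G (Nm G r (\<chi> j k. t * \<nu>$j$k)) i j = t * RM G (Nm G r \<nu>) i j"
  by (simp add: RM_def Nm_def Lf_def sum_2 algebra_simps)

lemma alg_final:
  assumes D: "Dt (typeA a b c d e f) \<noteq> 0" and h0: "E1 (typeA a b c d e f) \<nu>"
    and h1: "E1 (typeA a b c d e f) (Nm (typeA a b c d e f) 1 \<nu>)"
    and h2: "E1 (typeA a b c d e f) (Nm (typeA a b c d e f) 2 \<nu>)"
  shows "\<nu> = 0"
proof -
  define G where "G = typeA a b c d e f"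
  define s where "s = RM G \<nu> 1 2"
  have sc: "Dt G * \<nu>$j$k = s * Am G $j$k" for j k
    unfolding G_def s_def by (rule alg_scale[OF alg_skew[OF h0]])
  have dv: "(\<chi> j k. Dt G * \<nu>$j$k) = (\<chi> j k. s * Am G $j$k)"
    using sc by (simp add: vec_eq_iff)
  have key: "Dt G * RM G (Nm G r \<nu>) i j = s * RM G (Nm G r (Am G)) i j" for r i j
  proof -
    have "Dt G * RM G (Nm G r \<nu>) i j = RM G (Nm G r (\<chi> j k. Dt G * \<nu>$j$k)) i j"
      by (rule RMN_lin[symmetric])
    also have "\<dots> = RM G (Nm G r (\<chi> j k. s * Am G $j$k)) i j" using dv by simp
    also have "\<dots> = s * RM G (Nm G r (Am G)) i j" by (rule RMN_lin)
    finally show ?thesis .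
  qed
  show ?thesis
  proof (cases "s = 0")
    case True
    then have "Dt G * \<nu>$j$k = 0" for j k using sc by simp
    then have "\<nu>$j$k = 0" for j k using D unfolding G_def by simp
    then show ?thesis by (simp add: vec_eq_iff)
  next
    case False
    have sk1: "RM G (Nm G 1 \<nu>) 1 1 = 0" "RM G (Nm G 1 \<nu>) 2 2 = 0"
      "RM G (Nm G 1 \<nu>) 1 2 + RM G (Nm G 1 \<nu>) 2 1 = 0"
      using alg_skew[OF h1] unfolding G_def by simp_all
    have sk2: "RM G (Nm G 2 \<nu>) 1 1 = 0" "RM G (Nm G 2 \<nu>) 2 2 = 0"
      "RM G (Nm G 2 \<nu>) 1 2 + RM G (Nm G 2 \<nu>) 2 1 = 0"
      using alg_skew[OF h2] unfolding G_def by simp_all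
    have z: "RM G (Nm G r (Am G)) i j = 0" if "RM G (Nm G r \<nu>) i j = 0" for r i j
      using key[of r i j] that False by simp
    have z2: "RM G (Nm G r (Am G)) 1 2 + RM G (Nm G r (Am G)) 2 1 = 0"
      if "RM G (Nm G r \<nu>) 1 2 + RM G (Nm G r \<nu>) 2 1 = 0" for r
    proof -
      have "s * (RM G (Nm G r (Am G)) 1 2 + RM G (Nm G r (Am G)) 2 1)
          = Dt G * (RM G (Nm G r \<nu>) 1 2 + RM G (Nm G r \<nu>) 2 1)"
        by (simp only: distrib_left key)
      then have "s * (RM G (Nm G r (Am G)) 1 2 + RM G (Nm G r (Am G)) 2 1) = 0"
        using that by simp
      then show ?thesis using False by simp
    qed
    have "Dt G = 0" unfolding G_def
      by (rule alg_noderiv; fact z[OF sk1(1), unfolded G_def] z[OF sk1(2), unfolded G_def]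
          z2[OF sk1(3), unfolded G_def] z[OF sk2(1), unfolded G_def] z[OF sk2(2), unfolded G_def]
          z2[OF sk2(3), unfolded G_def])
    then show ?thesis using D unfolding G_def by simp
  qed
qed

definition gt :: "(2 \<Rightarrow> 2 \<Rightarrow> 2 \<Rightarrow> real) \<Rightarrow> real^2 \<Rightarrow> real^2 \<Rightarrow> real^2" where
  "gt G u v = (\<chi> k. \<Sum>i\<in>UNIV. \<Sum>j\<in>UNIV. u$i * v$j * G i j k)"

lemma nabla_eq: "nabla G Y Z p = frechet_derivative Z (at p) (Y p) + gt G (Y p) (Z p)"
  by (simp add: nabla_def dirderiv_def gt_def)

lemma nabla_const: "nabla G Y (\<lambda>q. C) = (\<lambda>p. gt G (Y p) C)"
  by (simp add: nabla_eq fun_eq_iff)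

lemma lie_eq: "lie X Y p = frechet_derivative Y (at p) (X p) - frechet_derivative X (at p) (Y p)"
  by (simp add: lie_def dirderiv_def)

lemma gt_zero: "gt G 0 v = 0" by (simp add: gt_def vec_eq_iff)

lemma vec2_expand: "(v::real^2) = (\<Sum>i\<in>UNIV. v$i *\<^sub>R axis i 1)"
  using basis_expansion[of v] by (simp add: scalar_mult_eq_scaleR)

lemma lin_expand:
  fixes f :: "real^2 \<Rightarrow> 'b::real_vector"
  assumes "linear f"
  shows "f v = (\<Sum>i\<in>UNIV. v$i *\<^sub>R f (axis i 1))"
proof -
  have "f v = f (\<Sum>i\<in>UNIV. v$i *\<^sub>R axis i 1)" using vec2_expand[of v] by simp
  also have "\<dots> = (\<Sum>i\<in>UNIV. v$i *\<^sub>R f (axis i 1))"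
    using assms by (simp add: linear_sum linear_scale)
  finally show ?thesis .
qed

lemma sum_axis: "(\<Sum>b\<in>UNIV. axis (k::2) 1 $ b * f b) = (f k :: real)"
proof -
  have "(\<Sum>b\<in>UNIV. axis (k::2) 1 $ b * f b) = (\<Sum>b\<in>UNIV. if b = k then f b else 0)"
    by (rule sum.cong) (auto simp: axis_def)
  also have "\<dots> = f k" by simp
  finally show ?thesis .
qed

lemma sum_axis': "(\<Sum>b\<in>UNIV. f b * axis (k::2) 1 $ b) = (f k :: real)"
  using sum_axis[of k f] by (simp add: mult.commute)

lemma gt_axis1: "gt G (axis i 1) v $ k = (\<Sum>b\<in>UNIV. v$b * G i b k)"
proof -
  have "gt G (axis i 1) v $ k = (\<Sum>a\<in>UNIV. axis i 1 $ a * (\<Sum>b\<in>UNIV. v$b * G a b k))"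
    unfolding gt_def by (simp add: sum_distrib_left mult.assoc)
  then show ?thesis by (simp only: sum_axis)
qed

lemma gt_axis2: "gt G u (axis j 1) $ k = (\<Sum>a\<in>UNIV. u$a * G a j k)"
proof -
  have "gt G u (axis j 1) $ k = (\<Sum>a\<in>UNIV. u$a * (\<Sum>b\<in>UNIV. axis j 1 $ b * G a b k))"
    unfolding gt_def by (simp add: sum_distrib_left mult.assoc mult.left_commute)
  then show ?thesis by (simp only: sum_axis)
qed

lemma gt_axis_axis: "gt G (axis i 1) (axis j 1) $ k = G i j k"
  by (simp add: gt_axis1 sum_axis)

lemma ricci_rc: "ricci G p j k = rc G j k"
proof -
  have lie0: "lie (\<lambda>p. axis i 1) (\<lambda>p. axis j 1) = (\<lambda>p. 0)" for i j :: 2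
    by (simp add: lie_def dirderiv_def fun_eq_iff)
  have c: "curv G (coord i) (coord j) (coord k) p $ i
      = (\<Sum>l\<in>UNIV. G j k l * G i l i - G i k l * G j l i)" for i
  proof -
    have "curv G (coord i) (coord j) (coord k) p
      = gt G (axis i 1) (gt G (axis j 1) (axis k 1)) - gt G (axis j 1) (gt G (axis i 1) (axis k 1))"
      unfolding curv_def coord_def lie0 by (simp add: nabla_const nabla_eq gt_zero)
    then show ?thesis by (simp add: gt_axis1 sum_axis sum_subtractf)
  qed
  show ?thesis unfolding ricci_def rc_def c ..
qed

lemma Dt_ricci: "det (\<chi> j k. ricci G p j k) = Dt G"
  by (simp add: det_2 ricci_rc Dt_def)

lemma Lf_linear: "linear (Lf G i j k)"
  by (rule linearI) (simp_all add: Lf_def sum_2 algebra_simps)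

lemma Nm_linear: "linear (Nm G l)"
proof (rule linearI)
  fix x y :: "real^2^2" and c :: real
  show "Nm G l (x + y) = Nm G l x + Nm G l y"
    using linear_add[OF Lf_linear] by (simp add: Nm_def vec_eq_iff)
  show "Nm G l (c *\<^sub>R x) = c *\<^sub>R Nm G l x"
    using linear_scale[OF Lf_linear] by (simp add: Nm_def vec_eq_iff)
qed

lemma Ck2_facts:
  assumes "Ck_on (Suc (Suc k)) U X" "open U" "q \<in> U"
  shows "(X has_derivative frechet_derivative X (at q)) (at q)"
    "((\<lambda>p. frechet_derivative X (at p) v) has_derivative
        frechet_derivative (\<lambda>p. frechet_derivative X (at p) v) (at q)) (at q)"
    "Ck_on k U (\<lambda>p. frechet_derivative (\<lambda>p. frechet_derivative X (at p) v) (at p) w)"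
proof -
  have d1: "X differentiable_on U" and d2: "(\<lambda>p. frechet_derivative X (at p) v) differentiable_on U"
    and ck: "Ck_on k U (\<lambda>p. frechet_derivative (\<lambda>p. frechet_derivative X (at p) v) (at p) w)"
    using assms(1) by auto
  show "(X has_derivative frechet_derivative X (at q)) (at q)"
    using d1 assms(2,3) differentiable_on_eq_differentiable_at frechet_derivative_works by blast
  show "((\<lambda>p. frechet_derivative X (at p) v) has_derivative
        frechet_derivative (\<lambda>p. frechet_derivative X (at p) v) (at q)) (at q)"
    using d2 assms(2,3) differentiable_on_eq_differentiable_at frechet_derivative_works by blast
  show "Ck_on k U (\<lambda>p. frechet_derivative (\<lambda>p. frechet_derivative X (at p) v) (at p) w)"
    by (rule ck)
qed

lemma fd_minus:
  assumes "(f has_derivative f') (at p)"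
  shows "frechet_derivative (\<lambda>q. - f q) (at p) = (\<lambda>v. - f' v)"
  using has_derivative_minus[OF assms] frechet_derivative_at by metis

lemma KE_vec:
  assumes AK: "affine_killing G U X" and U: "open U" and p: "p \<in> U"
  shows "frechet_derivative (\<lambda>q. frechet_derivative X (at q) (axis j 1)) (at p) (axis i 1)
     = frechet_derivative X (at p) (gt G (axis i 1) (axis j 1))
       + gt G (axis i 1) (- frechet_derivative X (at p) (axis j 1))
       + gt G (- frechet_derivative X (at p) (axis i 1)) (axis j 1)"
proof -
  define GJ where "GJ j q = frechet_derivative X (at q) (axis j 1)" for j q
  have sm: "smooth_on U X" and cond: "\<And>Y Z. smooth_on U Y \<Longrightarrow> smooth_on U Z \<Longrightarrow>
        (\<forall>p\<in>U. lie X (nabla G Y Z) p - nabla G Y (lie X Z) p - nabla G (lie X Y) Z p = 0)"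
    using AK unfolding affine_killing_def by auto
  have ck: "Ck_on (Suc (Suc 0)) U X" using sm unfolding smooth_on_def by blast
  have dGJ: "(GJ j has_derivative frechet_derivative (GJ j) (at p)) (at p)" for j
    unfolding GJ_def by (rule Ck2_facts(2)[OF ck U p])
  have eq: "lie X (nabla G (\<lambda>q. axis i 1) (\<lambda>q. axis j 1)) p
      - nabla G (\<lambda>q. axis i 1) (lie X (\<lambda>q. axis j 1)) p
      - nabla G (lie X (\<lambda>q. axis i 1)) (\<lambda>q. axis j 1) p = 0"
  proof -
    have sY: "smooth_on U (\<lambda>q. axis i 1)" by (rule smooth_const[OF U]) simp
    have sZ: "smooth_on U (\<lambda>q. axis j 1)" by (rule smooth_const[OF U]) simp
    show ?thesis using cond[OF sY sZ] p by blast
  qed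
  have lieC: "lie X (\<lambda>q. C) = (\<lambda>q. - frechet_derivative X (at q) C)" for C
    by (simp add: lie_eq fun_eq_iff)
  have n1: "nabla G (\<lambda>q. axis i 1) (\<lambda>q. - GJ j q) p
      = - frechet_derivative (GJ j) (at p) (axis i 1) + gt G (axis i 1) (- GJ j p)"
    by (simp add: nabla_eq fd_minus[OF dGJ])
  have "lie X (\<lambda>q. gt G (axis i 1) (axis j 1)) p - (- frechet_derivative (GJ j) (at p) (axis i 1) + gt G (axis i 1) (- GJ j p))
      - gt G (- GJ i p) (axis j 1) = 0"
    using eq unfolding nabla_const lieC[of "axis j 1"] lieC[of "axis i 1"] GJ_def[symmetric]
    using n1 by (simp add: nabla_const)
  then show ?thesis unfolding lieC GJ_def[symmetric]
    by (simp add: algebra_simps)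
qed

lemma E_nth: "axis j (axis k (1::real)) $ a $ b = (if a = j \<and> b = k then 1 else (0::real))"
  by (simp add: axis_def)

lemma sum_E: "(\<Sum>j\<in>UNIV. \<Sum>k\<in>UNIV. c j k *\<^sub>R axis j (axis k (1::real))) = (\<chi> (j::2) (k::2). c j k)"
proof -
  have "(\<Sum>j\<in>UNIV. \<Sum>k\<in>UNIV. c j k *\<^sub>R axis j (axis k (1::real))) $ a $ b = c a b" for a b
  proof -
    have "(\<Sum>j\<in>UNIV. \<Sum>k\<in>UNIV. c j k *\<^sub>R axis j (axis k (1::real))) $ a $ b
       = (\<Sum>j\<in>UNIV. \<Sum>k\<in>UNIV. if a = j \<and> b = k then c j k else 0)"
      by (simp add: E_nth if_distrib cong: if_cong)
    also have "\<dots> = (\<Sum>j\<in>UNIV. if a = j then c j b else 0)"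
      by (rule sum.cong) (auto simp: if_distrib cong: if_cong)
    also have "\<dots> = c a b" by simp
    finally show ?thesis .
  qed
  then show ?thesis by (simp add: vec_eq_iff)
qed

definition mu :: "(real^2 \<Rightarrow> real^2) \<Rightarrow> real^2 \<Rightarrow> real^2^2" where
  "mu X q = (\<chi> j k. frechet_derivative X (at q) (axis j 1) $ k)"

lemma AK_ck2: "affine_killing G U X \<Longrightarrow> Ck_on (Suc (Suc 0)) U X"
  unfolding affine_killing_def smooth_on_def by blast

lemma KE_scalar:
  assumes AK: "affine_killing G U X" and U: "open U" and p: "p \<in> U"
  shows "frechet_derivative (\<lambda>q. frechet_derivative X (at q) (axis j 1)) (at p) (axis i 1) $ k
     = Lf G i j k (mu X p)"
proof -
  have linX: "linear (frechet_derivative X (at p))"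
    using Ck2_facts(1)[OF AK_ck2[OF AK] U p] has_derivative_linear by blast
  have e1: "frechet_derivative X (at p) V $ k = (\<Sum>l\<in>UNIV. V$l * frechet_derivative X (at p) (axis l 1) $ k)" for V
    by (subst lin_expand[OF linX]) simp
  have "(frechet_derivative X (at p) (gt G (axis i 1) (axis j 1))
       + gt G (axis i 1) (- frechet_derivative X (at p) (axis j 1))
       + gt G (- frechet_derivative X (at p) (axis i 1)) (axis j 1)) $ k
     = (\<Sum>l\<in>UNIV. G i j l * frechet_derivative X (at p) (axis l 1) $ k)
       + (\<Sum>b\<in>UNIV. - (frechet_derivative X (at p) (axis j 1) $ b) * G i b k)
       + (\<Sum>a\<in>UNIV. - (frechet_derivative X (at p) (axis i 1) $ a) * G a j k)"
    unfolding vector_add_component e1[of "gt G (axis i 1) (axis j 1)"] gt_axis_axis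
    unfolding gt_axis1 gt_axis2 vector_uminus_component ..
  also have "\<dots> = Lf G i j k (mu X p)"
    unfolding Lf_def mu_def sum_2 vec_lambda_beta by algebra
  finally show ?thesis unfolding KE_vec[OF AK U p] .
qed

lemma scalar_deriv:
  assumes AK: "affine_killing G U X" and U: "open U" and q: "q \<in> U"
  shows "((\<lambda>q. frechet_derivative X (at q) (axis j 1) $ k) has_derivative
           (\<lambda>v. \<Sum>l\<in>UNIV. v$l * Lf G l j k (mu X q))) (at q)"
proof -
  have d: "((\<lambda>q. frechet_derivative X (at q) (axis j 1)) has_derivative
        frechet_derivative (\<lambda>p. frechet_derivative X (at p) (axis j 1)) (at q)) (at q)"
    by (rule Ck2_facts(2)[OF AK_ck2[OF AK] U q])
  have lin: "linear (frechet_derivative (\<lambda>p. frechet_derivative X (at p) (axis j 1)) (at q))"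
    using d has_derivative_linear by blast
  have "((\<lambda>q. frechet_derivative X (at q) (axis j 1) $ k) has_derivative
        (\<lambda>v. frechet_derivative (\<lambda>p. frechet_derivative X (at p) (axis j 1)) (at q) v $ k)) (at q)"
    by (rule bounded_linear.has_derivative[OF bounded_linear_vec_nth d])
  moreover have "(\<lambda>v. frechet_derivative (\<lambda>p. frechet_derivative X (at p) (axis j 1)) (at q) v $ k)
      = (\<lambda>v. \<Sum>l\<in>UNIV. v$l * Lf G l j k (mu X q))"
  proof
    fix v
    show "frechet_derivative (\<lambda>p. frechet_derivative X (at p) (axis j 1)) (at q) v $ k
      = (\<Sum>l\<in>UNIV. v$l * Lf G l j k (mu X q))"
      by (subst lin_expand[OF lin]) (simp add: KE_scalar[OF AK U q])
  qed
  ultimately show ?thesis by simp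
qed

lemma mu_deriv:
  assumes AK: "affine_killing G U X" and U: "open U" and q: "q \<in> U"
  shows "(mu X has_derivative (\<lambda>v. \<Sum>l\<in>UNIV. v$l *\<^sub>R Nm G l (mu X q))) (at q)"
proof -
  have m: "mu X = (\<lambda>q. \<Sum>j\<in>UNIV. \<Sum>k\<in>UNIV. (frechet_derivative X (at q) (axis j 1) $ k) *\<^sub>R axis j (axis k (1::real)))"
    by (simp add: mu_def sum_E fun_eq_iff)
  have "((\<lambda>q. \<Sum>j\<in>UNIV. \<Sum>k\<in>UNIV. (frechet_derivative X (at q) (axis j 1) $ k) *\<^sub>R axis j (axis k (1::real)))
     has_derivative (\<lambda>v. \<Sum>j\<in>UNIV. \<Sum>k\<in>UNIV. (\<Sum>l\<in>UNIV. v$l * Lf G l j k (mu X q)) *\<^sub>R axis j (axis k (1::real)))) (at q)"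
    by (intro has_derivative_sum has_derivative_scaleR_left scalar_deriv[OF AK U q])
  moreover have "(\<lambda>v. \<Sum>j\<in>UNIV. \<Sum>k\<in>UNIV. (\<Sum>l\<in>UNIV. v$l * Lf G l j k (mu X q)) *\<^sub>R axis j (axis k (1::real)))
      = (\<lambda>v. \<Sum>l\<in>UNIV. v$l *\<^sub>R Nm G l (mu X q))"
    by (simp add: sum_E fun_eq_iff vec_eq_iff Nm_def)
  ultimately show ?thesis unfolding m by simp
qed

lemma Lf_bl: "bounded_linear (Lf G i j k)"
  using Lf_linear linear_conv_bounded_linear by blast

lemma Nm_bl: "bounded_linear (Nm G l)"
  using Nm_linear linear_conv_bounded_linear by blast

lemma sum_axis_vec: "(\<Sum>l\<in>UNIV. axis (r::2) 1 $ l *\<^sub>R N l) = (N r :: 'a::real_vector)"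
proof -
  have "(\<Sum>l\<in>UNIV. axis (r::2) 1 $ l *\<^sub>R N l) = (\<Sum>l\<in>UNIV. if l = r then N l else 0)"
    by (rule sum.cong) (auto simp: axis_def)
  also have "\<dots> = N r" by simp
  finally show ?thesis .
qed

lemma mu_cont:
  assumes AK: "affine_killing G U X" and U: "open U"
  shows "continuous_on U (mu X)"
  by (rule has_derivative_continuous_on, rule has_derivative_at_withinI, rule mu_deriv[OF AK U]) simp

lemma lin_comp_cont:
  assumes AK: "affine_killing G U X" and U: "open U" and bl: "bounded_linear \<Phi>"
  shows "continuous_on U (\<lambda>q. \<Phi> (mu X q))"
  using continuous_on_compose[OF mu_cont[OF AK U] linear_continuous_on[OF bl]] by (simp add: o_def)

lemma lin_comp_deriv:
  assumes AK: "affine_killing G U X" and U: "open U" and q: "q \<in> U" and bl: "bounded_linear \<Phi>"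
  shows "((\<lambda>q. \<Phi> (mu X q)) has_derivative (\<lambda>v. \<Phi> (\<Sum>l\<in>UNIV. v$l *\<^sub>R Nm G l (mu X q)))) (at q)"
  by (rule bounded_linear.has_derivative[OF bl mu_deriv[OF AK U q]])

lemma E1_at:
  assumes AK: "affine_killing G U X" and U: "open U" and p: "p \<in> U"
  shows "E1 G (mu X p)"
  unfolding E1_def
proof (intro allI)
  fix i j k l :: 2
  define hu where "hu q v = Lf G i j k (\<Sum>l'\<in>UNIV. v$l' *\<^sub>R Nm G l' (mu X q))" for q v
  define hw where "hw q v = Lf G l j k (\<Sum>l'\<in>UNIV. v$l' *\<^sub>R Nm G l' (mu X q))" for q v
  have gu: "(\<lambda>q. \<Sum>l'\<in>UNIV. axis r 1 $ l' * Lf G l' j k (mu X q)) = (\<lambda>q. Lf G r j k (mu X q))" for r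
    by (simp add: sum_axis)
  have hax: "(\<Sum>l'\<in>UNIV. axis r 1 $ l' *\<^sub>R Nm G l' (mu X q)) = Nm G r (mu X q)" for r q
    by (rule sum_axis_vec)
  have "hu p (axis l 1) = hw p (axis i 1)"
  proof (rule clairaut[OF U p])
    show "\<And>q. q \<in> U \<Longrightarrow> ((\<lambda>q. frechet_derivative X (at q) (axis j 1) $ k) has_derivative
           (\<lambda>v. \<Sum>l\<in>UNIV. v$l * Lf G l j k (mu X q))) (at q)"
      by (rule scalar_deriv[OF AK U])
    show "((\<lambda>q. \<Sum>l'\<in>UNIV. axis i 1 $ l' * Lf G l' j k (mu X q)) has_derivative hu q) (at q)"
      if "q \<in> U" for q
      unfolding gu hu_def by (rule lin_comp_deriv[OF AK U that Lf_bl])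
    show "((\<lambda>q. \<Sum>l'\<in>UNIV. axis l 1 $ l' * Lf G l' j k (mu X q)) has_derivative hw q) (at q)"
      if "q \<in> U" for q
      unfolding gu hw_def by (rule lin_comp_deriv[OF AK U that Lf_bl])
    show "continuous_on U (\<lambda>q. hu q (axis l 1))"
      unfolding hu_def hax
      by (rule lin_comp_cont[OF AK U bounded_linear_compose[OF Lf_bl Nm_bl]])
    show "continuous_on U (\<lambda>q. hw q (axis i 1))"
      unfolding hw_def hax
      by (rule lin_comp_cont[OF AK U bounded_linear_compose[OF Lf_bl Nm_bl]])
  qed
  then show "Lf G i j k (Nm G l (mu X p)) = Lf G l j k (Nm G i (mu X p))"
    unfolding hu_def hw_def hax .
qed

lemma zero_deriv:
  fixes F :: "real^2 \<Rightarrow> real"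
  assumes U: "open U" and p: "p \<in> U" and z: "\<And>q. q \<in> U \<Longrightarrow> F q = 0"
    and d: "(F has_derivative F') (at p)"
  shows "F' v = 0"
proof -
  have "(F has_derivative (\<lambda>v. 0)) (at p)"
    by (rule transf[OF has_derivative_const U p]) (simp add: z)
  then have "F' = (\<lambda>v. 0)" using d has_derivative_unique by blast
  then show ?thesis by simp
qed

lemma E2_at:
  assumes AK: "affine_killing G U X" and U: "open U" and p: "p \<in> U"
  shows "E1 G (Nm G r (mu X p))"
  unfolding E1_def
proof (intro allI)
  fix i j k l :: 2
  define \<Phi> where "\<Phi> \<nu> = Lf G i j k (Nm G l \<nu>) - Lf G l j k (Nm G i \<nu>)" for \<nu>
  have bl: "bounded_linear \<Phi>" unfolding \<Phi>_def
    by (intro bounded_linear_sub bounded_linear_compose[OF Lf_bl Nm_bl])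
  have z: "\<Phi> (mu X q) = 0" if "q \<in> U" for q
    using E1_at[OF AK U that] unfolding E1_def \<Phi>_def by simp
  have "\<Phi> (\<Sum>l'\<in>UNIV. axis r 1 $ l' *\<^sub>R Nm G l' (mu X p)) = 0"
    by (rule zero_deriv[OF U p _ lin_comp_deriv[OF AK U p bl]]) (rule z)
  then show "Lf G i j k (Nm G l (Nm G r (mu X p))) = Lf G l j k (Nm G i (Nm G r (mu X p)))"
    unfolding sum_axis_vec \<Phi>_def by simp
qed

lemma killing_imp_const:
  assumes nd: "ricci_nondegenerate (typeA a b c d e f)" and U: "open U" and C: "connected U"
    and AK: "affine_killing (typeA a b c d e f) U X"
  shows "\<exists>B::real^2. \<forall>p\<in>U. X p = B"
proof -
  define G where "G = typeA a b c d e f"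
  have D: "Dt G \<noteq> 0" using nd Dt_ricci unfolding ricci_nondegenerate_def G_def by metis
  have AK': "affine_killing G U X" using AK unfolding G_def .
  have mu0: "mu X p = 0" if "p \<in> U" for p
    using alg_final[OF D[unfolded G_def] E1_at[OF AK U that] E2_at[OF AK U that] E2_at[OF AK U that]] .
  have hd: "(X has_derivative (\<lambda>v. 0)) (at p)" if p: "p \<in> U" for p
  proof -
    have d: "(X has_derivative frechet_derivative X (at p)) (at p)"
      by (rule Ck2_facts(1)[OF AK_ck2[OF AK] U p])
    have lin: "linear (frechet_derivative X (at p))" using d has_derivative_linear by blast
    have z: "frechet_derivative X (at p) (axis j 1) = 0" for j
      using mu0[OF p] unfolding mu_def by (simp add: vec_eq_iff)
    have "frechet_derivative X (at p) = (\<lambda>v. 0)"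
      by (rule ext, subst lin_expand[OF lin]) (simp add: z)
    then show ?thesis using d by simp
  qed
  show ?thesis
  proof (cases "U = {}")
    case True then show ?thesis by simp
  next
    case False
    then obtain p0 where p0: "p0 \<in> U" by blast
    have "X p = X p0" if "p \<in> U" for p
      by (rule has_derivative_zero_unique_connected[OF U C hd that p0])
    then show ?thesis by blast
  qed
qed

lemma clairaut_vec:
  fixes Z :: "real^2 \<Rightarrow> real^2"
  assumes ck: "Ck_on (Suc (Suc 0)) U Z" and U: "open U" and p: "p \<in> U"
  shows "frechet_derivative (\<lambda>q. frechet_derivative Z (at q) u) (at p) w
       = frechet_derivative (\<lambda>q. frechet_derivative Z (at q) w) (at p) u"
proof -
  have "frechet_derivative (\<lambda>q. frechet_derivative Z (at q) u) (at p) w $ k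
       = frechet_derivative (\<lambda>q. frechet_derivative Z (at q) w) (at p) u $ k" for k
  proof (rule clairaut[OF U p, where g="\<lambda>q. Z q $ k" and g'="\<lambda>q v. frechet_derivative Z (at q) v $ k"
      and hu="\<lambda>q v. frechet_derivative (\<lambda>q. frechet_derivative Z (at q) u) (at q) v $ k"
      and hw="\<lambda>q v. frechet_derivative (\<lambda>q. frechet_derivative Z (at q) w) (at q) v $ k"])
    show "((\<lambda>q. Z q $ k) has_derivative (\<lambda>v. frechet_derivative Z (at q) v $ k)) (at q)" if "q \<in> U" for q
      by (rule bounded_linear.has_derivative[OF bounded_linear_vec_nth Ck2_facts(1)[OF ck U that]])
    show "((\<lambda>q. frechet_derivative Z (at q) u $ k) has_derivative
       (\<lambda>v. frechet_derivative (\<lambda>q. frechet_derivative Z (at q) u) (at q) v $ k)) (at q)" if "q \<in> U" for q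
      by (rule bounded_linear.has_derivative[OF bounded_linear_vec_nth Ck2_facts(2)[OF ck U that]])
    show "((\<lambda>q. frechet_derivative Z (at q) w $ k) has_derivative
       (\<lambda>v. frechet_derivative (\<lambda>q. frechet_derivative Z (at q) w) (at q) v $ k)) (at q)" if "q \<in> U" for q
      by (rule bounded_linear.has_derivative[OF bounded_linear_vec_nth Ck2_facts(2)[OF ck U that]])
    have c1: "continuous_on U (\<lambda>q. frechet_derivative (\<lambda>q. frechet_derivative Z (at q) u) (at q) w)"
      using Ck2_facts(3)[OF ck U p, of u w] by simp
    have c2: "continuous_on U (\<lambda>q. frechet_derivative (\<lambda>q. frechet_derivative Z (at q) w) (at q) u)"
      using Ck2_facts(3)[OF ck U p, of w u] by simp
    show "continuous_on U (\<lambda>q. frechet_derivative (\<lambda>q. frechet_derivative Z (at q) u) (at q) w $ k)"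
      using continuous_on_compose[OF c1 linear_continuous_on[OF bounded_linear_vec_nth]] by (simp add: o_def)
    show "continuous_on U (\<lambda>q. frechet_derivative (\<lambda>q. frechet_derivative Z (at q) w) (at q) u $ k)"
      using continuous_on_compose[OF c2 linear_continuous_on[OF bounded_linear_vec_nth]] by (simp add: o_def)
  qed
  then show ?thesis by (simp add: vec_eq_iff)
qed

lemma gt_bilinear: "bounded_bilinear (gt G)"
proof -
  have "bilinear (gt G)"
    unfolding bilinear_def
    by (auto intro!: linearI simp: gt_def vec_eq_iff sum_2 algebra_simps)
  then show ?thesis using bilinear_conv_bounded_bilinear by blast
qed

lemma const_imp_killing:
  assumes U: "open U" and XB: "\<And>p. p \<in> U \<Longrightarrow> X p = B"
  shows "affine_killing G U X"
  unfolding affine_killing_def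
proof (intro conjI allI impI ballI)
  show "smooth_on U X" by (rule smooth_const[OF U XB])
  fix Y Z :: "real^2 \<Rightarrow> real^2" and p
  assume sY: "smooth_on U Y" and sZ: "smooth_on U Z" and p: "p \<in> U"
  have ckY: "Ck_on (Suc (Suc 0)) U Y" using sY unfolding smooth_on_def by blast
  have ckZ: "Ck_on (Suc (Suc 0)) U Z" using sZ unfolding smooth_on_def by blast
  have fdX0: "frechet_derivative X (at q) = (\<lambda>v. 0)" if "q \<in> U" for q
    using fd_cong[OF U that XB] by simp
  have lieX: "lie X W q = frechet_derivative W (at q) B" if "q \<in> U" for W q
    using that by (simp add: lie_eq XB fdX0)
  define ZG where "ZG i q = frechet_derivative Z (at q) (axis i 1)" for i q
  define H where "H i = frechet_derivative (ZG i) (at p)" for i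
  define DY where "DY = frechet_derivative Y (at p)"
  define DZ where "DZ = frechet_derivative Z (at p)"
  have dY: "(Y has_derivative DY) (at p)" unfolding DY_def by (rule Ck2_facts(1)[OF ckY U p])
  have dZ: "(Z has_derivative DZ) (at p)" unfolding DZ_def by (rule Ck2_facts(1)[OF ckZ U p])
  have dZG: "(ZG i has_derivative H i) (at p)" for i
    unfolding H_def ZG_def by (rule Ck2_facts(2)[OF ckZ U p])
  have linZ: "linear (frechet_derivative Z (at q))" if "q \<in> U" for q
    using Ck2_facts(1)[OF ckZ U that] has_derivative_linear by blast
  have linH: "linear (H i)" for i using dZG has_derivative_linear by blast
  have expZ: "frechet_derivative Z (at q) v = (\<Sum>i\<in>UNIV. v$i *\<^sub>R ZG i q)" if "q \<in> U" for q v
    unfolding ZG_def by (rule lin_expand[OF linZ[OF that]])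
  define W1 where "W1 q = (\<Sum>i\<in>UNIV. Y q $ i *\<^sub>R ZG i q) + gt G (Y q) (Z q)" for q
  have eqW1: "nabla G Y Z q = W1 q" if "q \<in> U" for q
    unfolding W1_def nabla_eq expZ[OF that] ..
  have dW1: "(W1 has_derivative (\<lambda>v. (\<Sum>i\<in>UNIV. Y p $ i *\<^sub>R H i v + DY v $ i *\<^sub>R ZG i p)
       + (gt G (Y p) (DZ v) + gt G (DY v) (Z p)))) (at p)"
    unfolding W1_def
    by (intro has_derivative_add has_derivative_sum has_derivative_scaleR
        bounded_linear.has_derivative[OF bounded_linear_vec_nth dY] dZG
        bounded_bilinear.FDERIV[OF gt_bilinear] dY dZ)
  have T1: "lie X (nabla G Y Z) p = (\<Sum>i\<in>UNIV. Y p $ i *\<^sub>R H i B + DY B $ i *\<^sub>R ZG i p)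
       + (gt G (Y p) (DZ B) + gt G (DY B) (Z p))"
  proof -
    have "lie X (nabla G Y Z) p = frechet_derivative (nabla G Y Z) (at p) B" by (rule lieX[OF p])
    also have "\<dots> = frechet_derivative W1 (at p) B" using fd_cong[OF U p eqW1] by simp
    also have "\<dots> = (\<Sum>i\<in>UNIV. Y p $ i *\<^sub>R H i B + DY B $ i *\<^sub>R ZG i p)
       + (gt G (Y p) (DZ B) + gt G (DY B) (Z p))"
      by (simp add: frechet_derivative_at[OF dW1, symmetric])
    finally show ?thesis .
  qed
  define V2 where "V2 q = (\<Sum>l\<in>UNIV. B$l *\<^sub>R ZG l q)" for q
  have eqV2: "lie X Z q = V2 q" if "q \<in> U" for q
    unfolding V2_def lieX[OF that] expZ[OF that] ..
  have dV2: "(V2 has_derivative (\<lambda>v. \<Sum>l\<in>UNIV. B$l *\<^sub>R H l v)) (at p)"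
    unfolding V2_def by (intro has_derivative_sum has_derivative_scaleR_right dZG)
  have V2p: "V2 p = DZ B" unfolding V2_def DZ_def expZ[OF p] ..
  have T2: "nabla G Y (lie X Z) p = (\<Sum>l\<in>UNIV. B$l *\<^sub>R H l (Y p)) + gt G (Y p) (DZ B)"
  proof -
    have f: "frechet_derivative (lie X Z) (at p) = frechet_derivative V2 (at p)"
      by (rule fd_cong[OF U p eqV2])
    show ?thesis
      unfolding nabla_eq f eqV2[OF p] V2p
      by (simp add: frechet_derivative_at[OF dV2, symmetric])
  qed
  have T3: "nabla G (lie X Y) Z p = (\<Sum>i\<in>UNIV. DY B $ i *\<^sub>R ZG i p) + gt G (DY B) (Z p)"
    unfolding nabla_eq lieX[OF p] DY_def[symmetric] expZ[OF p] ..
  have sym: "H i (axis l 1) = H l (axis i 1)" for i l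
    unfolding H_def ZG_def by (rule clairaut_vec[OF ckZ U p])
  have "(\<Sum>i\<in>UNIV. Y p $ i *\<^sub>R H i B) = (\<Sum>i\<in>UNIV. Y p $ i *\<^sub>R (\<Sum>l\<in>UNIV. B$l *\<^sub>R H i (axis l 1)))"
    by (subst lin_expand[OF linH]) (rule refl)
  also have "\<dots> = (\<Sum>l\<in>UNIV. B$l *\<^sub>R (\<Sum>i\<in>UNIV. Y p $ i *\<^sub>R H l (axis i 1)))"
    by (simp add: sum_2 sym algebra_simps)
  also have "\<dots> = (\<Sum>l\<in>UNIV. B$l *\<^sub>R H l (Y p))"
    by (simp only: lin_expand[OF linH, symmetric])
  finally have S: "(\<Sum>i\<in>UNIV. Y p $ i *\<^sub>R H i B) = (\<Sum>l\<in>UNIV. B$l *\<^sub>R H l (Y p))" .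
  show "lie X (nabla G Y Z) p - nabla G Y (lie X Z) p - nabla G (lie X Y) Z p = 0"
    unfolding T1 T2 T3 using S by (simp add: sum.distrib algebra_simps)
qed

theorem mainTheorem14:
  fixes a b c d e f :: real and U :: "(real^2) set" and X :: "real^2 \<Rightarrow> real^2"
  assumes "ricci_nondegenerate (typeA a b c d e f)"
    and "open U" and "connected U"
  shows "affine_killing (typeA a b c d e f) U X \<longleftrightarrow> (\<exists>B::real^2. \<forall>p\<in>U. X p = B)"
proof
  assume "affine_killing (typeA a b c d e f) U X"
  then show "\<exists>B::real^2. \<forall>p\<in>U. X p = B" using killing_imp_const assms by blast
next
  assume "\<exists>B::real^2. \<forall>p\<in>U. X p = B"
  then obtain B where "\<forall>p\<in>U. X p = B" by blast
  then show "affine_killing (typeA a b c d e f) U X" using const_imp_killing[OF assms(2)] by blast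
qed

end
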